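(* Let $G$ be an interval graph and let $[C_1,\ldots,C_t]$ be a consecutive clique arrangement of $G$ with $|C_1|\ge 3$. For a vertex $v$ let $r(v)=\max\{i : v\in C_i\}$, order the vertices of $C_1$ by nondecreasing $r(v)$, and let $\alpha,\beta,\gamma$ be the first three vertices of $C_1$ in this ordering. If $\mathcal{P}$ is a triangle packing of $G$ in which $\alpha$ is covered by a triangle, then there is a triangle packing $\mathcal{P}'$ of $G$ with $|\mathcal{P}'|=|\mathcal{P}|$ such that $\{\alpha,\beta,\gamma\}$ is one of the triangles of $\mathcal{P}'$.
   Context: A graph is an interval graph if it is the intersection graph of a finite collection of intervals on the real line. A consecutive clique arrangement of a graph $G$ is a linear ordering $[C_1,\ldots,C_t]$ of all maximal cliques of $G$ such that for each vertex $v$, the cliques containing $v$ are consecutive in the ordering. A triangle packing is a collection of pairwise vertex-disjoint triangles. *)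

theory Defs
  imports Complex_Main
begin

definition simple_graph :: "'a set \<Rightarrow> ('a \<Rightarrow> 'a \<Rightarrow> bool) \<Rightarrow> bool" where
  "simple_graph V E \<longleftrightarrow> finite V \<and> (\<forall>u v. E u v \<longrightarrow> E v u) \<and> (\<forall>v. \<not> E v v)
     \<and> (\<forall>u v. E u v \<longrightarrow> u \<in> V \<and> v \<in> V)"

definition interval_graph :: "'a set \<Rightarrow> ('a \<Rightarrow> 'a \<Rightarrow> bool) \<Rightarrow> bool" where
  "interval_graph V E \<longleftrightarrow> simple_graph V E \<and>
     (\<exists>l r :: 'a \<Rightarrow> real. (\<forall>v\<in>V. l v \<le> r v) \<and>
        (\<forall>u\<in>V. \<forall>v\<in>V. u \<noteq> v \<longrightarrow> (E u v \<longleftrightarrow> {l u..r u} \<inter> {l v..r v} \<noteq> {})))"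

definition is_clique :: "'a set \<Rightarrow> ('a \<Rightarrow> 'a \<Rightarrow> bool) \<Rightarrow> 'a set \<Rightarrow> bool" where
  "is_clique V E C \<longleftrightarrow> C \<subseteq> V \<and> (\<forall>u\<in>C. \<forall>v\<in>C. u \<noteq> v \<longrightarrow> E u v)"

definition maximal_clique :: "'a set \<Rightarrow> ('a \<Rightarrow> 'a \<Rightarrow> bool) \<Rightarrow> 'a set \<Rightarrow> bool" where
  "maximal_clique V E C \<longleftrightarrow> is_clique V E C \<and> (\<forall>D. is_clique V E D \<and> C \<subseteq> D \<longrightarrow> D = C)"

definition consecutive_clique_arrangement ::
  "'a set \<Rightarrow> ('a \<Rightarrow> 'a \<Rightarrow> bool) \<Rightarrow> 'a set list \<Rightarrow> bool" where
  "consecutive_clique_arrangement V E Cs \<longleftrightarrow>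
     distinct Cs \<and> set Cs = {C. maximal_clique V E C} \<and>
     (\<forall>v\<in>V. \<forall>i j k. i \<le> j \<and> j \<le> k \<and> k < length Cs \<and> v \<in> Cs ! i \<and> v \<in> Cs ! k
                \<longrightarrow> v \<in> Cs ! j)"

text \<open>r(v) = max index of a clique containing v (0-indexed).\<close>
definition rmax :: "'a set list \<Rightarrow> 'a \<Rightarrow> nat" where
  "rmax Cs v = Max {i. i < length Cs \<and> v \<in> Cs ! i}"

definition is_triangle :: "'a set \<Rightarrow> ('a \<Rightarrow> 'a \<Rightarrow> bool) \<Rightarrow> 'a set \<Rightarrow> bool" where
  "is_triangle V E T \<longleftrightarrow> card T = 3 \<and> is_clique V E T"

definition triangle_packing :: "'a set \<Rightarrow> ('a \<Rightarrow> 'a \<Rightarrow> bool) \<Rightarrow> 'a set set \<Rightarrow> bool" where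
  "triangle_packing V E P \<longleftrightarrow> (\<forall>T\<in>P. is_triangle V E T) \<and>
     (\<forall>T\<in>P. \<forall>T'\<in>P. T \<noteq> T' \<longrightarrow> T \<inter> T' = {})"

end

theory Submission
  imports Defs
begin

lemma clique_subset: "is_clique V E C \<Longrightarrow> D \<subseteq> C \<Longrightarrow> is_clique V E D"
  unfolding is_clique_def by blast

lemma maxcl_exists:
  assumes fin: "finite V" and K: "is_clique V E K"
  shows "\<exists>C. maximal_clique V E C \<and> K \<subseteq> C"
proof -
  define S where "S = {D. is_clique V E D \<and> K \<subseteq> D}"
  have finS: "finite S" unfolding S_def is_clique_def
    by (rule finite_subset[of _ "Pow V"]) (use fin in auto)
  have neS: "K \<in> S" using K unfolding S_def by auto
  define m where "m = Max (card ` S)"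
  have "m \<in> card ` S" unfolding m_def using finS neS by (intro Max_in) auto
  then obtain D where D: "D \<in> S" "card D = m" by auto
  have "maximal_clique V E D"
    unfolding maximal_clique_def
  proof (intro conjI allI impI)
    show "is_clique V E D" using D S_def by auto
    fix D' assume h: "is_clique V E D' \<and> D \<subseteq> D'"
    then have "D' \<in> S" using D S_def by auto
    then have "card D' \<le> m" unfolding m_def using finS by auto
    moreover have "finite D'" using h fin unfolding is_clique_def by (auto intro: finite_subset)
    ultimately show "D' = D" using h D by (metis card_subset_eq card_mono antisym)
  qed
  then show ?thesis using D S_def by auto
qed

lemma swap_packing:
  assumes P: "triangle_packing V E P"
  and T0: "T0 \<in> P" "x \<in> T0" "u \<notin> T0" "u \<in> V"
  and cl: "is_clique V E (insert u (T0 - {x}))"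
  and dom: "\<forall>w. E u w \<longrightarrow> w = x \<or> E x w"
  and sym: "\<forall>a b. E a b \<longrightarrow> E b a"
  and irr: "\<forall>a. \<not> E a a"
  shows "\<exists>P'. triangle_packing V E P' \<and> card P' = card P \<and> insert u (T0 - {x}) \<in> P'"
proof -
  define sw where "sw = (\<lambda>w. if w=u then x else if w=x then u else w)"
  have inj: "inj sw" unfolding inj_def sw_def by auto
  have xV: "x \<in> V" using P T0 unfolding triangle_packing_def is_triangle_def is_clique_def by auto
  have img0: "sw ` T0 = insert u (T0 - {x})"
    using T0 unfolding sw_def by (auto simp: image_iff)
  have tri: "is_triangle V E (sw ` T)" if T: "T \<in> P" for T
  proof (cases "T = T0")
    case True
    have "card (sw ` T0) = card T0" using inj by (simp add: card_image inj_on_def inj_def)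
    then show ?thesis using True img0 cl P T0 unfolding triangle_packing_def is_triangle_def by auto
  next
    case False
    then have xT: "x \<notin> T" using P T T0 unfolding triangle_packing_def by blast
    have Tt: "is_triangle V E T" using P T unfolding triangle_packing_def by auto
    have c: "card (sw ` T) = 3" using Tt inj unfolding is_triangle_def
      by (simp add: card_image inj_on_def inj_def)
    have sub: "sw ` T \<subseteq> V" using Tt xV T0(4) unfolding is_triangle_def is_clique_def sw_def by auto
    have "\<forall>a\<in>T. \<forall>b\<in>T. sw a \<noteq> sw b \<longrightarrow> E (sw a) (sw b)"
    proof (intro ballI impI)
      fix a b assume ab: "a \<in> T" "b \<in> T" "sw a \<noteq> sw b"
      then have "a \<noteq> b" by auto
      then have Eab: "E a b" using ab Tt unfolding is_triangle_def is_clique_def by auto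
      show "E (sw a) (sw b)"
      proof (cases "a = u")
        case True
        then have "b \<noteq> u" "b \<noteq> x" using \<open>a\<noteq>b\<close> xT ab by auto
        then show ?thesis using True Eab dom unfolding sw_def by auto
      next
        case False
        note aF = False
        show ?thesis
        proof (cases "b = u")
          case True
          then have "a \<noteq> x" using xT ab by auto
          then show ?thesis using True aF Eab dom sym unfolding sw_def by auto
        next
          case False
          then show ?thesis using aF Eab xT ab unfolding sw_def by auto
        qed
      qed
    qed
    then have "is_clique V E (sw ` T)" using sub unfolding is_clique_def by auto
    then show ?thesis using c unfolding is_triangle_def by auto
  qed
  define P' where "P' = (\<lambda>T. sw ` T) ` P"
  have injP: "inj_on (\<lambda>T. sw ` T) P" using inj by (simp add: inj_on_def inj_image_eq_iff)
  have "triangle_packing V E P'"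
    unfolding triangle_packing_def P'_def
  proof (intro conjI ballI impI)
    fix T assume "T \<in> (\<lambda>T. sw ` T) ` P" then show "is_triangle V E T" using tri by auto
  next
    fix T T' assume h: "T \<in> (\<lambda>T. sw ` T) ` P" "T' \<in> (\<lambda>T. sw ` T) ` P" "T \<noteq> T'"
    then obtain A B where AB: "A \<in> P" "B \<in> P" "T = sw ` A" "T' = sw ` B" by auto
    then have "A \<noteq> B" using h by auto
    then have "A \<inter> B = {}" using P AB unfolding triangle_packing_def by auto
    then show "T \<inter> T' = {}" using AB inj by (simp add: image_Int[symmetric])
  qed
  moreover have "card P' = card P" unfolding P'_def using injP by (simp add: card_image)
  moreover have "insert u (T0 - {x}) \<in> P'" unfolding P'_def using img0 T0 by (metis image_eqI)
  ultimately show ?thesis by blast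
qed


theorem mainTheorem4:
  fixes V :: "'a set" and E :: "'a \<Rightarrow> 'a \<Rightarrow> bool" and Cs :: "'a set list"
    and \<alpha> \<beta> \<gamma> :: 'a and P :: "'a set set"
  assumes "interval_graph V E"
    and "consecutive_clique_arrangement V E Cs"
    and "Cs \<noteq> []" and "card (Cs ! 0) \<ge> 3"
    and "\<alpha> \<in> Cs ! 0" and "\<beta> \<in> Cs ! 0" and "\<gamma> \<in> Cs ! 0"
    and "\<alpha> \<noteq> \<beta>" and "\<alpha> \<noteq> \<gamma>" and "\<beta> \<noteq> \<gamma>"
    and "rmax Cs \<alpha> \<le> rmax Cs \<beta>" and "rmax Cs \<beta> \<le> rmax Cs \<gamma>"
    and "\<forall>v\<in>Cs ! 0 - {\<alpha>, \<beta>, \<gamma>}. rmax Cs \<gamma> \<le> rmax Cs v"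
    and "triangle_packing V E P"
    and "\<exists>T\<in>P. \<alpha> \<in> T"
  shows "\<exists>P'. triangle_packing V E P' \<and> card P' = card P \<and> {\<alpha>, \<beta>, \<gamma>} \<in> P'"
proof -
  note A = assms
  define C0 where "C0 = Cs ! 0"
  have sg: "simple_graph V E" using A(1) unfolding interval_graph_def by auto
  then have finV: "finite V" and sym: "\<forall>a b. E a b \<longrightarrow> E b a" and irr: "\<forall>a. \<not> E a a"
    and inV: "\<forall>a b. E a b \<longrightarrow> a \<in> V \<and> b \<in> V"
    unfolding simple_graph_def by auto
  have cca0: "distinct Cs \<and> set Cs = {C. maximal_clique V E C} \<and>
    (\<forall>v\<in>V. \<forall>i j k. i \<le> j \<and> j \<le> k \<and> k < length Cs \<and> v \<in> Cs ! i \<and> v \<in> Cs ! k \<longrightarrow> v \<in> Cs ! j)"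
    using A(2) unfolding consecutive_clique_arrangement_def by assumption
  note cca = cca0[THEN conjunct1] cca0[THEN conjunct2, THEN conjunct1] cca0[THEN conjunct2, THEN conjunct2]
  have consec: "v \<in> Cs ! j" if "v \<in> V" "i \<le> j" "j \<le> k" "k < length Cs" "v \<in> Cs ! i" "v \<in> Cs ! k" for v i j k
    using cca(3)[rule_format, of v i j k] that by blast
  have len: "0 < length Cs" using A(3) by auto
  have C0max: "maximal_clique V E C0" using cca(2) len unfolding C0_def
    by (metis mem_Collect_eq nth_mem)
  then have C0cl: "is_clique V E C0" unfolding maximal_clique_def by auto
  then have C0V: "C0 \<subseteq> V" unfolding is_clique_def by auto
  have rge: "i \<le> rmax Cs v" if "i < length Cs" "v \<in> Cs ! i" for i v
    unfolding rmax_def by (rule Max_ge) (use that in auto)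
  have rin: "rmax Cs v < length Cs \<and> v \<in> Cs ! rmax Cs v" if "v \<in> C0" for v
  proof -
    have "rmax Cs v \<in> {i. i < length Cs \<and> v \<in> Cs ! i}"
      unfolding rmax_def by (rule Max_in) (use that len C0_def in auto)
    then show ?thesis by auto
  qed
  have ex0: "\<exists>v\<in>C0. rmax Cs v = 0"
  proof (rule ccontr)
    assume "\<not> ?thesis"
    then have pos: "\<forall>v\<in>C0. 0 < rmax Cs v" by auto
    have "0 < rmax Cs \<alpha>" "rmax Cs \<alpha> < length Cs" using rin[of \<alpha>] pos A(5) C0_def by auto
    then have l1: "1 < length Cs" by linarith
    have "C0 \<subseteq> Cs ! 1"
    proof
      fix v assume v: "v \<in> C0"
      have "(0::nat) \<le> 1 \<and> 1 \<le> rmax Cs v \<and> rmax Cs v < length Cs \<and> v \<in> Cs ! 0 \<and> v \<in> Cs ! rmax Cs v"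
        using rin[OF v] pos v C0_def by auto
      then show "v \<in> Cs ! 1" using consec[of v 0 1 "rmax Cs v"] v C0V C0_def by auto
    qed
    moreover have "is_clique V E (Cs ! 1)" using cca(2) l1
      by (metis maximal_clique_def mem_Collect_eq nth_mem)
    ultimately have "Cs ! 1 = C0" using C0max unfolding maximal_clique_def by blast
    then show False using cca(1) l1 len unfolding C0_def by (simp add: nth_eq_iff_index_eq)
  qed
  have ra0: "rmax Cs \<alpha> = 0"
  proof -
    obtain v where v: "v \<in> C0" "rmax Cs v = 0" using ex0 by auto
    have "rmax Cs \<alpha> \<le> rmax Cs v"
    proof (cases "v \<in> {\<alpha>,\<beta>,\<gamma>}")
      case True then show ?thesis using A(11,12) by auto
    next
      case False
      then have "rmax Cs \<gamma> \<le> rmax Cs v" using A(13) v C0_def by blast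
      then show ?thesis using A(11,12) by linarith
    qed
    then show ?thesis using v by auto
  qed
  have incl: "\<exists>i<length Cs. a \<in> Cs ! i \<and> b \<in> Cs ! i" if "E a b" for a b
  proof -
    have "is_clique V E {a,b}" using that sym inV unfolding is_clique_def by auto
    then obtain C where "maximal_clique V E C" "{a,b} \<subseteq> C" using maxcl_exists finV by blast
    then show ?thesis using cca(2) by (metis in_set_conv_nth insert_subset mem_Collect_eq)
  qed
  have nbr: "w \<in> C0" if Ew: "E \<alpha> w" for w
  proof -
    obtain i where i: "i < length Cs" "\<alpha> \<in> Cs ! i" "w \<in> Cs ! i" using incl[OF Ew] by blast
    have "i = 0" using rge[OF i(1,2)] ra0 by simp
    then show ?thesis using i C0_def by simp
  qed
  have dom: "\<forall>w. E u w \<longrightarrow> w = v \<or> E v w" if uv: "u \<in> C0" "v \<in> C0" "rmax Cs u \<le> rmax Cs v" for u v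
  proof (intro allI impI)
    fix w assume Euw: "E u w"
    obtain i where i: "i < length Cs" "u \<in> Cs ! i" "w \<in> Cs ! i" using incl[OF Euw] by auto
    have "i \<le> rmax Cs v" using rge[OF i(1,2)] uv by auto
    then have vi: "v \<in> Cs ! i" using consec[of v 0 i "rmax Cs v"] rin[OF uv(2)] uv(2) C0V C0_def by auto
    have "Cs ! i \<in> set Cs" using i by auto
    then have "is_clique V E (Cs ! i)" using cca(2) unfolding maximal_clique_def by auto
    then show "w = v \<or> E v w" using vi i unfolding is_clique_def by auto
  qed
  have triCl: "T \<subseteq> C0" if "is_triangle V E T" "\<alpha> \<in> T" for T
    using that nbr A(5) unfolding is_triangle_def is_clique_def C0_def by (metis subsetI)
  obtain T where T: "T \<in> P" "\<alpha> \<in> T" using A(15) by auto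
  have Ttri: "is_triangle V E T" using T A(14) unfolding triangle_packing_def by auto
  have step1: "\<exists>P1 T1. triangle_packing V E P1 \<and> card P1 = card P \<and> T1 \<in> P1 \<and> \<alpha> \<in> T1 \<and> \<beta> \<in> T1"
  proof (cases "\<beta> \<in> T")
    case True then show ?thesis using A(14) T by blast
  next
    case False
    have "\<not> T \<subseteq> {\<alpha>,\<gamma>}"
    proof
      assume "T \<subseteq> {\<alpha>,\<gamma>}"
      then have "card T \<le> card {\<alpha>,\<gamma>}" by (intro card_mono) auto
      also have "\<dots> \<le> 2" by (simp add: card_insert_if)
      finally have "card T \<le> 2" .
      then show False using Ttri unfolding is_triangle_def by auto
    qed
    then obtain x where x: "x \<in> T" "x \<noteq> \<alpha>" "x \<noteq> \<gamma>" by auto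
    have xC: "x \<in> C0" using triCl[OF Ttri T(2)] x by auto
    have "x \<noteq> \<beta>" using x False by auto
    then have "rmax Cs \<gamma> \<le> rmax Cs x" using A(13) xC x C0_def by auto
    then have d: "\<forall>w. E \<beta> w \<longrightarrow> w = x \<or> E x w" using dom[of \<beta> x] A(6,12) xC C0_def by auto
    have "is_clique V E (insert \<beta> (T - {x}))"
      apply (rule clique_subset[OF C0cl]) using triCl[OF Ttri T(2)] A(6) C0_def by auto
    from swap_packing[OF A(14) T(1) x(1) False _ this d sym irr]
    obtain P1 where "triangle_packing V E P1 \<and> card P1 = card P \<and> insert \<beta> (T - {x}) \<in> P1"
      using A(6) C0V C0_def by auto
    then show ?thesis using T x by blast
  qed
  then obtain P1 T1 where P1: "triangle_packing V E P1" "card P1 = card P" "T1 \<in> P1" "\<alpha> \<in> T1" "\<beta> \<in> T1"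
    by blast
  have T1tri: "is_triangle V E T1" using P1 unfolding triangle_packing_def by auto
  have T1C: "T1 \<subseteq> C0" using triCl[OF T1tri P1(4)] .
  have fT1: "finite T1" using T1tri unfolding is_triangle_def by (metis card.infinite zero_neq_numeral)
  show ?thesis
  proof (cases "\<gamma> \<in> T1")
    case True
    have "{\<alpha>,\<beta>,\<gamma>} \<subseteq> T1" using True P1 by auto
    moreover have "card {\<alpha>,\<beta>,\<gamma>} = 3" using A(8,9,10) by auto
    ultimately have "{\<alpha>,\<beta>,\<gamma>} = T1" using T1tri fT1 unfolding is_triangle_def by (metis card_subset_eq)
    then show ?thesis using P1 by blast
  next
    case False
    have "\<not> T1 \<subseteq> {\<alpha>,\<beta>}"
    proof
      assume "T1 \<subseteq> {\<alpha>,\<beta>}"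
      then have "card T1 \<le> card {\<alpha>,\<beta>}" by (intro card_mono) auto
      also have "\<dots> \<le> 2" by (simp add: card_insert_if)
      finally show False using T1tri unfolding is_triangle_def by auto
    qed
    then obtain y where y: "y \<in> T1" "y \<noteq> \<alpha>" "y \<noteq> \<beta>" by auto
    have yg: "y \<noteq> \<gamma>" using y False by auto
    have yC: "y \<in> C0" using T1C y by auto
    have "rmax Cs \<gamma> \<le> rmax Cs y" using A(13) yC y yg C0_def by auto
    then have d: "\<forall>w. E \<gamma> w \<longrightarrow> w = y \<or> E y w" using dom[of \<gamma> y] A(7) yC C0_def by auto
    have "{\<alpha>,\<beta>,y} \<subseteq> T1" using y P1 by auto
    moreover have "card {\<alpha>,\<beta>,y} = 3" using A(8) y by auto
    ultimately have T1eq: "{\<alpha>,\<beta>,y} = T1" using T1tri fT1 unfolding is_triangle_def by (metis card_subset_eq)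
    have eq: "insert \<gamma> (T1 - {y}) = {\<alpha>,\<beta>,\<gamma>}" using T1eq y by auto
    have "is_clique V E (insert \<gamma> (T1 - {y}))"
      apply (rule clique_subset[OF C0cl]) using T1C A(7) C0_def by auto
    from swap_packing[OF P1(1) P1(3) y(1) False _ this d sym irr]
    show ?thesis using A(7) C0V C0_def P1(2) eq by auto
  qed
qed

end
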